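(* Let $m,n\ge1$, let $\mathbf{V}\in\mathbb{R}^{n\times n}$ be a nonzero symmetric matrix such that $\langle\mathbf{X}^\intercal\mathbf{X},\mathbf{V}/\|\mathbf{V}\|\rangle\ge0$ for all $\mathbf{X}\in\mathbb{R}^{m\times n}$, and let $\|\mathbf{X}\|_{\mathcal{H}}(\mathbf{V})=\big(\langle\mathbf{X}^\intercal\mathbf{X},\mathbf{V}/\|\mathbf{V}\|\rangle\big)^{1/2}$. Let $\mathcal{X}\subseteq\mathbb{R}^{m\times n}$ be a domain of inputs and $\mathcal{W}\subseteq\mathbb{R}^{m\times n}$ a set of weight matrices (the same for both classifiers), and let $\Phi(a,y)=\max\{0,1-ay\}$ be the hinge loss with $y\in\{-1,+1\}$. Define $R=\sup_{\mathbf{X}\in\mathcal{X}}\|\mathbf{X}\|$, $B=\sup_{\mathbf{W}\in\mathcal{W}}\|\mathbf{W}\|$, $R'=\sup_{\mathbf{X}\in\mathcal{X}}\|\mathbf{X}\|_{\mathcal{H}}(\mathbf{V})$, $B'=\sup_{\mathbf{W}\in\mathcal{W}}\|\mathbf{W}\|_{\mathcal{H}}(\mathbf{V})$, $c=\max_{y}\max_{a\in[-BR,BR]}|\Phi(a,y)|$ and $c'=\max_y\max_{a\in[-B'R',B'R']}|\Phi(a,y)|$. Then $R'\le R$, $B'\le B$ and $c'\le c$.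
   Context: $\langle\mathbf{A},\mathbf{B}\rangle=\sum_{i,j}a_{ij}b_{ij}$ denotes the Frobenius inner product and $\|\cdot\|$ the Frobenius norm. $R,B,c$ are the constants appearing in the generalization bound for the Frobenius-norm constrained support tensor machine, and $R',B',c'$ those appearing in the analogous bound for the kernel support matrix machine with norm $\|\cdot\|_{\mathcal{H}}(\mathbf{V})$. *)

theory Defs
  imports "HOL-Analysis.Analysis"
begin

text \<open>Real m x n matrices are rendered as real^'n^'m. On this type the library's
  inner product and norm are exactly the Frobenius inner product and Frobenius norm.\<close>

definition frob_inner :: "real^'n^'m \<Rightarrow> real^'n^'m \<Rightarrow> real" where
  "frob_inner A B = (\<Sum>i\<in>UNIV. \<Sum>j\<in>UNIV. A $ i $ j * B $ i $ j)"

definition frob_norm :: "real^'n^'m \<Rightarrow> real" where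
  "frob_norm A = sqrt (frob_inner A A)"

definition hnorm :: "real^'n^'n \<Rightarrow> real^'n^'m \<Rightarrow> real" where
  "hnorm V X = sqrt (frob_inner (transpose X ** X) ((1 / frob_norm V) *\<^sub>R V))"

definition hinge :: "real \<Rightarrow> real \<Rightarrow> real" where
  "hinge a y = max 0 (1 - a * y)"

text \<open>c = max over y in {-1,1} and a in [-BR, BR] of |Phi(a,y)| (a maximum of a
  continuous function on a compact set, expressed as a supremum).\<close>
definition hinge_const :: "real \<Rightarrow> real" where
  "hinge_const t = Sup {\<bar>hinge a y\<bar> | a y. y \<in> {-1, 1} \<and> a \<in> {-t..t}}"

end

theory Submission
  imports Defs
begin

lemma fi_inner: "frob_inner A B = inner A B"
  by (simp add: frob_inner_def inner_vec_def)

lemma fn_norm: "frob_norm A = norm A"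
  by (simp add: frob_norm_def fi_inner norm_eq_sqrt_inner)

lemma col_norm_sum: "(\<Sum>j\<in>UNIV. (norm (column j X))\<^sup>2) = (norm (X::real^'n^'m))\<^sup>2"
proof -
  have "(norm X)\<^sup>2 = (\<Sum>i\<in>UNIV. \<Sum>j\<in>UNIV. (X$i$j)\<^sup>2)"
    by (simp add: norm_vec_def L2_set_def sum_nonneg real_sqrt_pow2 power2_eq_square)
  also have "\<dots> = (\<Sum>j\<in>UNIV. \<Sum>i\<in>UNIV. (X$i$j)\<^sup>2)" by (rule sum.swap)
  also have "\<dots> = (\<Sum>j\<in>UNIV. (norm (column j X))\<^sup>2)"
    by (simp add: norm_vec_def L2_set_def sum_nonneg real_sqrt_pow2 power2_eq_square column_def)
  finally show ?thesis by simp
qed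

lemma xtx_entry: "(transpose X ** X) $ j $ k = inner (column j X) (column k (X::real^'n^'m))"
  by (simp add: matrix_matrix_mult_def transpose_def column_def inner_vec_def)

lemma xtx_bound: "(norm (transpose X ** (X::real^'n^'m)))\<^sup>2 \<le> ((norm X)\<^sup>2)\<^sup>2"
proof -
  have "(norm (transpose X ** X))\<^sup>2 = (\<Sum>j\<in>UNIV. \<Sum>k\<in>UNIV. ((transpose X ** X)$j$k)\<^sup>2)"
    by (simp add: norm_vec_def L2_set_def sum_nonneg real_sqrt_pow2 power2_eq_square)
  also have "\<dots> \<le> (\<Sum>j\<in>UNIV. \<Sum>k\<in>UNIV. (norm (column j X))\<^sup>2 * (norm (column k X))\<^sup>2)"
  proof (intro sum_mono)
    fix j k
    have "\<bar>inner (column j X) (column k X)\<bar> \<le> norm (column j X) * norm (column k X)"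
      by (rule Cauchy_Schwarz_ineq2)
    hence "(inner (column j X) (column k X))\<^sup>2 \<le> (norm (column j X) * norm (column k X))\<^sup>2"
      by (metis abs_ge_zero power2_abs power_mono)
    thus "((transpose X ** X)$j$k)\<^sup>2 \<le> (norm (column j X))\<^sup>2 * (norm (column k X))\<^sup>2"
      by (simp add: xtx_entry power_mult_distrib)
  qed
  also have "\<dots> = (\<Sum>j\<in>UNIV. (norm (column j X))\<^sup>2) * (\<Sum>k\<in>UNIV. (norm (column k X))\<^sup>2)"
    by (simp add: sum_product)
  also have "\<dots> = ((norm X)\<^sup>2)\<^sup>2" by (simp only: col_norm_sum power2_eq_square[of "(norm X)\<^sup>2"])
  finally show ?thesis .
qed

lemma hnorm_le:
  fixes V :: "real^'n^'n" and X :: "real^'n^'m"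
  assumes "V \<noteq> 0"
  shows "hnorm V X \<le> frob_norm X"
proof -
  let ?U = "(1 / norm V) *\<^sub>R V"
  have nU: "norm ?U = 1" using assms by simp
  have "inner (transpose X ** X) ?U \<le> norm (transpose X ** X) * norm ?U"
    by (rule norm_cauchy_schwarz)
  also have "\<dots> = norm (transpose X ** X)" using nU by simp
  also have "\<dots> \<le> (norm X)\<^sup>2"
    using xtx_bound[of X] by (meson norm_ge_zero zero_le_power2 power2_le_imp_le)
  finally have "inner (transpose X ** X) ?U \<le> (norm X)\<^sup>2" .
  hence "sqrt (inner (transpose X ** X) ?U) \<le> sqrt ((norm X)\<^sup>2)" by (rule real_sqrt_le_mono)
  thus ?thesis by (simp add: hnorm_def fi_inner fn_norm)
qed

lemma hinge_mono:
  assumes "0 \<le> s" "s \<le> t"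
  shows "hinge_const s \<le> hinge_const t"
  unfolding hinge_const_def
proof (rule cSup_subset_mono)
  show "{\<bar>hinge a y\<bar> |a y. y \<in> {- 1, 1} \<and> a \<in> {- s..s}} \<noteq> {}"
  proof -
    have "\<bar>hinge 0 1\<bar> \<in> {\<bar>hinge a y\<bar> |a y. y \<in> {- 1, 1} \<and> a \<in> {- s..s}}"
      using assms by (intro CollectI exI[of _ 0] exI[of _ 1]) auto
    thus ?thesis by blast
  qed
  show "bdd_above {\<bar>hinge a y\<bar> |a y. y \<in> {- 1, 1} \<and> a \<in> {- t..t}}"
    unfolding bdd_above_def
  proof (intro exI[of _ "1 + t"] ballI)
    fix z assume "z \<in> {\<bar>hinge a y\<bar> |a y. y \<in> {- 1, 1} \<and> a \<in> {- t..t}}"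
    then obtain a y where z: "z = \<bar>hinge a y\<bar>" "y = -1 \<or> y = 1" "-t \<le> a" "a \<le> t" by auto
    show "z \<le> 1 + t" using z(2) unfolding z(1) hinge_def
    proof
      assume "y = -1" thus "\<bar>max 0 (1 - a * y)\<bar> \<le> 1 + t" using z by simp
    next
      assume "y = 1" thus "\<bar>max 0 (1 - a * y)\<bar> \<le> 1 + t" using z by simp
    qed
  qed
  show "{\<bar>hinge a y\<bar> |a y. y \<in> {- 1, 1} \<and> a \<in> {- s..s}}
        \<subseteq> {\<bar>hinge a y\<bar> |a y. y \<in> {- 1, 1} \<and> a \<in> {- t..t}}"
  proof
    fix z assume "z \<in> {\<bar>hinge a y\<bar> |a y. y \<in> {- 1, 1} \<and> a \<in> {- s..s}}"
    then obtain a y where z: "z = \<bar>hinge a y\<bar>" "y \<in> {- 1, 1}" "a \<in> {- s..s}" by blast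
    have "a \<in> {-t..t}" using z(3) assms by simp
    thus "z \<in> {\<bar>hinge a y\<bar> |a y. y \<in> {- 1, 1} \<and> a \<in> {- t..t}}" using z by blast
  qed
qed

lemma sup_le:
  fixes f g :: "'a \<Rightarrow> real"
  assumes "S \<noteq> {}" "bdd_above (g ` S)" "\<And>x. f x \<le> g x"
  shows "Sup (f ` S) \<le> Sup (g ` S)"
  using assms by (intro cSUP_mono) auto

theorem theorem3:
  fixes V :: "real^'n^'n"
    and Xs :: "(real^'n^'m) set"
    and Ws :: "(real^'n^'m) set"
  assumes V_nz: "V \<noteq> 0"
    and V_sym: "transpose V = V"
    and V_psd: "\<forall>X :: real^'n^'m. frob_inner (transpose X ** X) ((1 / frob_norm V) *\<^sub>R V) \<ge> 0"
    and Xs_ne: "Xs \<noteq> {}" and Xs_bdd: "bounded Xs"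
    and Ws_ne: "Ws \<noteq> {}" and Ws_bdd: "bounded Ws"
  defines "R \<equiv> Sup (frob_norm ` Xs)"
    and "B \<equiv> Sup (frob_norm ` Ws)"
    and "R' \<equiv> Sup (hnorm V ` Xs)"
    and "B' \<equiv> Sup (hnorm V ` Ws)"
  shows "R' \<le> R \<and> B' \<le> B \<and> hinge_const (B' * R') \<le> hinge_const (B * R)"
proof -
  have bx: "bdd_above (frob_norm ` Xs)" using Xs_bdd
    unfolding fn_norm bounded_iff bdd_above_def by auto
  have bw: "bdd_above (frob_norm ` Ws)" using Ws_bdd
    unfolding fn_norm bounded_iff bdd_above_def by auto
  have 1: "R' \<le> R" unfolding R_def R'_def
    by (rule sup_le[OF Xs_ne bx hnorm_le[OF V_nz]])
  have 2: "B' \<le> B" unfolding B_def B'_def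
    by (rule sup_le[OF Ws_ne bw hnorm_le[OF V_nz]])
  have bhx: "bdd_above (hnorm V ` Xs)"
  proof -
    obtain M where M: "\<And>z. z \<in> Xs \<Longrightarrow> frob_norm z \<le> M" using bx unfolding bdd_above_def by auto
    have "\<And>z. z \<in> Xs \<Longrightarrow> hnorm V z \<le> M" using M hnorm_le[OF V_nz] order_trans by blast
    thus ?thesis by (intro bdd_aboveI2)
  qed
  have bhw: "bdd_above (hnorm V ` Ws)"
  proof -
    obtain M where M: "\<And>z. z \<in> Ws \<Longrightarrow> frob_norm z \<le> M" using bw unfolding bdd_above_def by auto
    have "\<And>z. z \<in> Ws \<Longrightarrow> hnorm V z \<le> M" using M hnorm_le[OF V_nz] order_trans by blast
    thus ?thesis by (intro bdd_aboveI2)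
  qed
  obtain x where x: "x \<in> Xs" using Xs_ne by auto
  obtain w where w: "w \<in> Ws" using Ws_ne by auto
  have R'0: "0 \<le> R'" unfolding R'_def
    using cSUP_upper[OF x bhx] V_psd[rule_format, of x] unfolding hnorm_def by (meson order_trans real_sqrt_ge_zero)
  have B'0: "0 \<le> B'" unfolding B'_def
    using cSUP_upper[OF w bhw] V_psd[rule_format, of w] unfolding hnorm_def by (meson order_trans real_sqrt_ge_zero)
  have "B' * R' \<le> B * R" using 1 2 R'0 B'0 by (intro mult_mono) auto
  hence "hinge_const (B' * R') \<le> hinge_const (B * R)"
    using R'0 B'0 by (intro hinge_mono) auto
  with 1 2 show ?thesis by simp
qed

end
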